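(* The Cesàro operator $\mathcal C: VH(\mathbb D)\to VH(\mathbb D)$ is not power bounded, not mean ergodic and not supercyclic.
   Context: $\mathbb D$ is the open unit disc. Define $v(z)=1$ if $|z|\le 1-1/e$ and $v(z)=(-\log(1-|z|))^{-1}$ if $1-1/e\le|z|<1$, $v_k=v^k$, $H^\infty_{v_k}=\{f \text{ analytic on }\mathbb D:\sup_{z\in\mathbb D}v_k(z)|f(z)|<\infty\}$ normed by this sup, and $VH(\mathbb D)=\bigcup_kH^\infty_{v_k}$ with the finest locally convex topology making all inclusions continuous. The Cesàro operator is $\mathcal C f(z)=\frac1z\int_0^z\frac{f(\zeta)}{1-\zeta}\,d\zeta$ for $z\neq0$, $\mathcal Cf(0)=f(0)$. For a locally convex Hausdorff space $X$ and continuous linear $T:X\to X$: $T$ is power bounded if $\{T^n:n\in\mathbb N_0\}$ is equicontinuous; $T$ is mean ergodic if the Cesàro means $T_{[n]}=\frac1n\sum_{m=1}^nT^m$ converge pointwise on $X$ (i.e. $(T_{[n]}x)_n$ converges in $X$ for every $x\in X$); $T$ is supercyclic if there exists $z\in X$ with $\{\lambda T^nz:\lambda\in\mathbb C,n\in\mathbb N_0\}$ dense in $X$. *)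

theory Defs
  imports "HOL-Complex_Analysis.Complex_Analysis"
begin

text \<open>Functions on the disc are represented as maps complex \<Rightarrow> complex that
vanish outside the open unit disc (so that equality of elements is equality
of functions on the disc).\<close>

definition vw :: "complex \<Rightarrow> real" where
  "vw z = (if norm z \<le> 1 - 1 / exp 1 then 1 else 1 / (- ln (1 - norm z)))"

definition in_Hvk :: "nat \<Rightarrow> (complex \<Rightarrow> complex) \<Rightarrow> bool" where
  "in_Hvk k f \<longleftrightarrow> f holomorphic_on ball 0 1 \<and> (\<forall>z. z \<notin> ball 0 1 \<longrightarrow> f z = 0)
     \<and> (\<exists>M. \<forall>z\<in>ball 0 1. vw z ^ k * norm (f z) \<le> M)"

definition norm_Hvk :: "nat \<Rightarrow> (complex \<Rightarrow> complex) \<Rightarrow> real" where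
  "norm_Hvk k f = (SUP z\<in>ball 0 1. vw z ^ k * norm (f z))"

definition VH :: "(complex \<Rightarrow> complex) set" where
  "VH = {f. \<exists>k. in_Hvk k f}"

text \<open>Seminorms on VH that are continuous for the inductive limit topology:
exactly those whose restriction to every step space is continuous.\<close>
definition VH_cont_seminorm :: "((complex \<Rightarrow> complex) \<Rightarrow> real) \<Rightarrow> bool" where
  "VH_cont_seminorm p \<longleftrightarrow>
     (\<forall>f\<in>VH. \<forall>g\<in>VH. p (\<lambda>z. f z + g z) \<le> p f + p g) \<and>
     (\<forall>f\<in>VH. \<forall>c::complex. p (\<lambda>z. c * f z) = norm c * p f) \<and>
     (\<forall>k. \<exists>C. \<forall>f. in_Hvk k f \<longrightarrow> p f \<le> C * norm_Hvk k f)"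

text \<open>The finest locally convex topology on VH making all inclusions continuous.\<close>
definition VH_top :: "(complex \<Rightarrow> complex) topology" where
  "VH_top = topology (\<lambda>U. U \<subseteq> VH \<and> (\<forall>x\<in>U. \<exists>p e. VH_cont_seminorm p \<and> e > 0 \<and>
       {y\<in>VH. p (\<lambda>z. y z - x z) < e} \<subseteq> U))"

definition cesaro :: "(complex \<Rightarrow> complex) \<Rightarrow> (complex \<Rightarrow> complex)" where
  "cesaro f = (\<lambda>z. if z \<in> ball 0 1 then
      (if z = 0 then f 0 else (1 / z) * contour_integral (linepath 0 z) (\<lambda>\<zeta>. f \<zeta> / (1 - \<zeta>)))
     else 0)"

definition power_bounded_VH :: "((complex \<Rightarrow> complex) \<Rightarrow> (complex \<Rightarrow> complex)) \<Rightarrow> bool" where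
  "power_bounded_VH T \<longleftrightarrow> (\<forall>V. openin VH_top V \<and> (\<lambda>_. 0) \<in> V \<longrightarrow>
     (\<exists>U. openin VH_top U \<and> (\<lambda>_. 0) \<in> U \<and> (\<forall>n::nat. \<forall>f\<in>U. (T ^^ n) f \<in> V)))"

definition cesaro_mean :: "((complex \<Rightarrow> complex) \<Rightarrow> (complex \<Rightarrow> complex)) \<Rightarrow> nat \<Rightarrow>
    (complex \<Rightarrow> complex) \<Rightarrow> (complex \<Rightarrow> complex)" where
  "cesaro_mean T n f = (\<lambda>z. (\<Sum>m=1..n. (T ^^ m) f z) / of_nat n)"

definition mean_ergodic_VH :: "((complex \<Rightarrow> complex) \<Rightarrow> (complex \<Rightarrow> complex)) \<Rightarrow> bool" where
  "mean_ergodic_VH T \<longleftrightarrow> (\<forall>f\<in>VH. \<exists>g. limitin VH_top (\<lambda>n. cesaro_mean T n f) g sequentially)"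

definition supercyclic_VH :: "((complex \<Rightarrow> complex) \<Rightarrow> (complex \<Rightarrow> complex)) \<Rightarrow> bool" where
  "supercyclic_VH T \<longleftrightarrow> (\<exists>z\<in>VH.
     VH_top closure_of {(\<lambda>w. c * (T ^^ n) z w) | c n. (c::complex) \<in> UNIV \<and> (n::nat) \<in> UNIV} = VH)"

end

theory Submission
  imports Defs
begin

lemma prim:
  assumes contf: "continuous_on (ball 0 1) h" and holh: "h holomorphic_on ball 0 1"
    and z: "z \<in> ball (0::complex) 1"
  shows "((\<lambda>x. contour_integral (linepath 0 x) h) has_field_derivative h z) (at z)"
proof -
  let ?S = "ball (0::complex) 1"
  have a_cs: "closed_segment 0 x \<subseteq> ?S" if "x \<in> ?S" for x
    using that convex_ball[of "0::complex" 1] unfolding convex_contains_segment by auto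
  { fix b c
    assume "closed_segment b c \<subseteq> ?S"
    then have abcs: "convex hull {0, b, c} \<subseteq> ?S"
      by (intro hull_minimal) (auto simp: ends_in_segment)
    then have "continuous_on (convex hull {0, b, c}) h"
      by (simp add: continuous_on_subset [OF contf])
    moreover have "h holomorphic_on interior (convex hull {0, b, c})"
      using holomorphic_on_subset[OF holh] abcs interior_subset by blast
    ultimately have "(h has_contour_integral 0) (linepath 0 b +++ linepath b c +++ linepath c 0)"
      by (intro Cauchy_theorem_triangle_interior) auto
  } note 0 = this
  show ?thesis
  proof (rule triangle_contour_integrals_starlike_primitive[where S="?S"])
    fix b c assume "closed_segment b c \<subseteq> ?S"
    from has_chain_integral_chain_integral3[OF 0[OF this]]
    show "contour_integral (linepath 0 b) h + contour_integral (linepath b c) h + contour_integral (linepath c 0) h = 0" .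
  qed (use a_cs contf z in auto)
qed

lemma cesaro_hol:
  assumes holf: "f holomorphic_on ball 0 1"
  shows "cesaro f holomorphic_on ball 0 1" "cesaro f 0 = f 0"
    "deriv (cesaro f) 0 = (f 0 + deriv f 0) / 2"
proof -
  let ?S = "ball (0::complex) 1"
  define h where "h = (\<lambda>\<zeta>. f \<zeta> / (1 - \<zeta>))"
  have nz: "1 - w \<noteq> 0" if "w \<in> ?S" for w
    using that by auto
  have holh: "h holomorphic_on ?S"
    unfolding h_def using holf nz by (intro holomorphic_intros) auto
  define F where "F = (\<lambda>x. contour_integral (linepath 0 x) h)"
  have dF: "(F has_field_derivative h w) (at w)" if "w \<in> ?S" for w
    unfolding F_def using holh that
    by (intro prim holomorphic_on_imp_continuous_on) auto
  have holF: "F holomorphic_on ?S"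
    using dF holomorphic_on_open by blast
  have F0: "F 0 = 0" by (simp add: F_def)
  define G where "G = (\<lambda>z. if z = 0 then deriv F 0 else (F z - F 0) / (z - 0))"
  have holG: "G holomorphic_on ?S"
    unfolding G_def by (rule pole_lemma[OF holF]) auto
  have h0: "h 0 = f 0" by (simp add: h_def)
  have dF0: "deriv F 0 = f 0"
    using dF[of 0] h0 by (simp add: DERIV_imp_deriv)
  have CG: "cesaro f w = G w" if "w \<in> ?S" for w
  proof (cases "w = 0")
    case True then show ?thesis by (simp add: cesaro_def G_def dF0)
  next
    case False then show ?thesis using that
      by (simp add: cesaro_def G_def F0 divide_inverse mult.commute) (simp add: F_def h_def divide_inverse)
  qed
  show holC: "cesaro f holomorphic_on ?S"
    using holG CG holomorphic_transform by metis
  show "cesaro f 0 = f 0" by (simp add: cesaro_def)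
  have GF: "w * G w = F w" if "w \<in> ?S" for w
    using that F0 by (simp add: G_def)
  have eq1: "G w + w * deriv G w = h w" if w: "w \<in> ?S" for w
  proof -
    have d1: "((\<lambda>w. w * G w) has_field_derivative (1 * G w + deriv G w * w)) (at w)"
      by (rule DERIV_mult[OF DERIV_ident holomorphic_derivI[OF holG open_ball w]])
    from d1 have "((\<lambda>w. w * G w) has_field_derivative (1 * G w + w * deriv G w)) (at w)"
      by (simp only: mult.commute[of "deriv G w" w])
    then have "(F has_field_derivative (1 * G w + w * deriv G w)) (at w)"
      by (rule has_field_derivative_transform_within_open[OF _ open_ball w]) (simp add: GF)
    then show ?thesis using dF[OF w] DERIV_unique by fastforce
  qed
  have holdG: "deriv G holomorphic_on ?S"
    using holG by (intro holomorphic_deriv) auto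
  have "deriv G 0 = deriv (\<lambda>w. h w - w * deriv G w) 0"
  proof (rule complex_derivative_transform_within_open[OF holG _ open_ball])
    show "(\<lambda>w. h w - w * deriv G w) holomorphic_on ?S"
      using holh holdG holG by (intro holomorphic_intros) auto
    fix w assume "w \<in> ?S" then show "G w = h w - w * deriv G w"
      using eq1[of w] by (simp add: algebra_simps)
  qed auto
  also have "\<dots> = deriv h 0 - (1 * deriv G 0 + 0 * deriv (deriv G) 0)"
  proof -
    have d2: "((\<lambda>w. h w - w * deriv G w) has_field_derivative (deriv h 0 - (1 * deriv G 0 + deriv (deriv G) 0 * 0))) (at 0)"
      by (rule DERIV_diff[OF holomorphic_derivI[OF holh open_ball] DERIV_mult[OF DERIV_ident holomorphic_derivI[OF holdG open_ball]]]) auto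
    have "deriv (deriv G) 0 * 0 = 0 * deriv (deriv G) 0" by (simp only: mult.commute)
    with d2 have "((\<lambda>w. h w - w * deriv G w) has_field_derivative (deriv h 0 - (1 * deriv G 0 + 0 * deriv (deriv G) 0))) (at 0)" by simp
    then show ?thesis by (rule DERIV_imp_deriv)
  qed
  finally have dG: "deriv G 0 = deriv h 0 / 2" by (simp add: field_simps)
  have "(h has_field_derivative ((deriv f 0 * (1 - 0) - f 0 * (0 - 1)) / ((1 - 0) * (1 - 0)))) (at 0)"
    unfolding h_def
    by (rule DERIV_divide[OF holomorphic_derivI[OF holf open_ball] DERIV_diff[OF DERIV_const DERIV_ident]]) auto
  then have dh: "deriv h 0 = deriv f 0 + f 0"
    by (simp add: DERIV_imp_deriv)
  have "deriv (cesaro f) 0 = deriv G 0"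
    by (rule complex_derivative_transform_within_open[OF holC holG open_ball]) (auto simp: CG)
  then show "deriv (cesaro f) 0 = (f 0 + deriv f 0) / 2"
    using dG dh by (simp add: add.commute)
qed

lemma cesaro_Re:
  assumes contf: "continuous_on (ball 0 1) f" and x: "0 < x" "x < 1"
  shows "\<exists>I. ((\<lambda>t. Re (f (of_real t)) / (1 - t)) has_integral I) {0..x} \<and>
             Re (cesaro f (of_real x)) = I / x"
proof -
  define h where "h = (\<lambda>\<zeta>. f \<zeta> / (1 - \<zeta>))"
  have "continuous_on (ball 0 1) h"
    unfolding h_def using contf by (intro continuous_intros) auto
  moreover have "closed_segment 0 (complex_of_real x) \<subseteq> ball 0 1"
    using x convex_ball[of "0::complex" 1] unfolding convex_contains_segment by auto
  ultimately have "h contour_integrable_on linepath 0 (of_real x)"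
    by (intro contour_integrable_continuous_linepath) (rule continuous_on_subset)
  then have "(h has_contour_integral contour_integral (linepath 0 (of_real x)) h) (linepath 0 (of_real x))"
    by (rule has_contour_integral_integral)
  then have "((\<lambda>t. h (of_real t)) has_integral contour_integral (linepath 0 (of_real x)) h) {Re 0..Re (of_real x)}"
    using x by (subst (asm) has_contour_integral_linepath_Reals_iff) auto
  then have "((\<lambda>t. Re (h (of_real t))) has_integral Re (contour_integral (linepath 0 (of_real x)) h)) {0..x}"
    by (intro has_integral_Re) simp
  moreover have "Re (h (of_real t)) = Re (f (of_real t)) / (1 - t)" for t
  proof -
    have "h (of_real t) = f (of_real t) / of_real (1 - t)" by (simp add: h_def)
    then show ?thesis by (simp only: Re_divide_of_real)
  qed
  moreover have "Re (cesaro f (of_real x)) = Re (contour_integral (linepath 0 (of_real x)) h) / x"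
    using x by (simp add: cesaro_def h_def)
  ultimately show ?thesis by auto
qed

lemma cesaro_mono:
  assumes contf: "continuous_on (ball 0 1) f" and contg: "continuous_on (ball 0 1) g"
    and le: "\<And>t. 0 \<le> t \<Longrightarrow> t < 1 \<Longrightarrow> Re (g (of_real t)) \<le> Re (f (of_real t))"
    and x: "0 \<le> x" "x < 1"
  shows "Re (cesaro g (of_real x)) \<le> Re (cesaro f (of_real x))"
proof (cases "x = 0")
  case True then show ?thesis using le[of 0] by (simp add: cesaro_def)
next
  case False
  then have x0: "0 < x" using x by auto
  obtain I where I: "((\<lambda>t. Re (f (of_real t)) / (1 - t)) has_integral I) {0..x}"
      "Re (cesaro f (of_real x)) = I / x"
    using cesaro_Re[OF contf x0 x(2)] by blast
  obtain J where J: "((\<lambda>t. Re (g (of_real t)) / (1 - t)) has_integral J) {0..x}"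
      "Re (cesaro g (of_real x)) = J / x"
    using cesaro_Re[OF contg x0 x(2)] by blast
  have "J \<le> I"
  proof (rule has_integral_le[OF J(1) I(1)])
    fix t assume "t \<in> {0..x}"
    then have "0 \<le> t" "t < 1" "0 < 1 - t" using x by auto
    then show "Re (g (of_real t)) / (1 - t) \<le> Re (f (of_real t)) / (1 - t)"
      using le by (simp add: divide_right_mono)
  qed
  then show ?thesis using I(2) J(2) x0 by (simp add: divide_right_mono)
qed

definition fc :: "complex \<Rightarrow> complex \<Rightarrow> complex" where
  "fc c = (\<lambda>z. if z \<in> ball 0 1 then c else 0)"

lemma cesaro_0: "cesaro f 0 = f 0" by (simp add: cesaro_def)

lemma fc_hol: "fc c holomorphic_on ball 0 1"
  by (rule holomorphic_transform[of "\<lambda>_. c"]) (auto simp: fc_def)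

lemma iter_hol: "f holomorphic_on ball 0 1 \<Longrightarrow> (cesaro ^^ n) f holomorphic_on ball 0 1"
  by (induction n) (auto intro: cesaro_hol(1))

lemma iter_cont: "f holomorphic_on ball 0 1 \<Longrightarrow> continuous_on (ball 0 1) ((cesaro ^^ n) f)"
  by (intro holomorphic_on_imp_continuous_on iter_hol)

lemma ftc_L:
  fixes c x :: real
  assumes x: "0 \<le> x" "x < 1"
  shows "((\<lambda>t. c * (- ln (1 - t)) ^ n / fact n / (1 - t)) has_integral
           (c * (- ln (1 - x)) ^ Suc n / fact (Suc n))) {0..x}"
proof -
  have d: "((\<lambda>t. c * (- ln (1 - t)) ^ Suc n / fact (Suc n)) has_real_derivative
           (c * (- ln (1 - t)) ^ n / fact n / (1 - t))) (at t within {0..x})" if t: "t \<in> {0..x}" for t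
  proof -
    have t1: "1 - t > 0" using t x by auto
    have d0: "((\<lambda>t. c * (- ln (1 - t)) ^ Suc n / fact (Suc n)) has_real_derivative
           (c * (of_nat (Suc n) * (- ln (1 - t)) ^ (Suc n - 1) * (- (- 1 / (1 - t)))) / fact (Suc n))) (at t within {0..x})"
      using t1 by (intro derivative_eq_intros) auto
    have eq: "c * (of_nat (Suc n) * (- ln (1 - t)) ^ (Suc n - 1) * (- (- 1 / (1 - t)))) / fact (Suc n)
       = c * (- ln (1 - t)) ^ n / fact n / (1 - t)"
      using t1 by simp
    show ?thesis using d0[unfolded eq] .
  qed
  have "((\<lambda>t. c * (- ln (1 - t)) ^ n / fact n / (1 - t)) has_integral
           (c * (- ln (1 - x)) ^ Suc n / fact (Suc n) - c * (- ln (1 - 0)) ^ Suc n / fact (Suc n))) {0..x}"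
    using x d by (intro fundamental_theorem_of_calculus) (auto simp: has_real_derivative_iff_has_vector_derivative)
  then show ?thesis by simp
qed

lemma LB:
  assumes c: "0 \<le> c"
  shows "0 \<le> x \<Longrightarrow> x < 1 \<Longrightarrow>
    c * (- ln (1 - x)) ^ n / fact n \<le> Re ((cesaro ^^ n) (fc (of_real c)) (of_real x))"
proof (induction n arbitrary: x)
  case 0
  then show ?case by (simp add: fc_def)
next
  case (Suc n)
  let ?g = "(cesaro ^^ n) (fc (of_real c))"
  have contg: "continuous_on (ball 0 1) ?g" by (rule iter_cont[OF fc_hol])
  show ?case
  proof (cases "x = 0")
    case True
    have "0 \<le> c * 0 ^ n / fact n" using c by simp
    then have "0 \<le> Re (?g 0)" using Suc.IH[of 0] by simp
    then show ?thesis using True by (simp add: cesaro_0)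
  next
    case False
    then have x0: "0 < x" using Suc.prems by auto
    obtain I where I: "((\<lambda>t. Re (?g (of_real t)) / (1 - t)) has_integral I) {0..x}"
        "Re (cesaro ?g (of_real x)) = I / x"
      using cesaro_Re[OF contg x0 Suc.prems(2)] by blast
    have "c * (- ln (1 - x)) ^ Suc n / fact (Suc n) \<le> I"
    proof (rule has_integral_le[OF ftc_L[OF Suc.prems] I(1)])
      fix t assume "t \<in> {0..x}"
      then have t: "0 \<le> t" "t < 1" "0 < 1 - t" using Suc.prems by auto
      then show "c * (- ln (1 - t)) ^ n / fact n / (1 - t) \<le> Re (?g (of_real t)) / (1 - t)"
        using divide_right_mono[OF Suc.IH[OF t(1,2)], of "1 - t"] by simp
    qed
    moreover have "0 \<le> c * (- ln (1 - x)) ^ Suc n / fact (Suc n)"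
    proof -
      have "0 \<le> - ln (1 - x)" using Suc.prems by simp
      then show ?thesis using c by (intro divide_nonneg_pos mult_nonneg_nonneg zero_le_power) auto
    qed
    moreover have "I \<le> I / x" if "0 \<le> I"
      using that x0 Suc.prems(2) by (simp add: le_divide_eq mult_left_le)
    ultimately show ?thesis using I(2) by simp
  qed
qed

lemma MON:
  assumes c: "0 \<le> c"
  shows "0 \<le> x \<Longrightarrow> x < 1 \<Longrightarrow>
    Re ((cesaro ^^ n) (fc (of_real c)) (of_real x)) \<le> Re ((cesaro ^^ Suc n) (fc (of_real c)) (of_real x))"
proof (induction n arbitrary: x)
  case 0
  show ?case
  proof (cases "x = 0")
    case True then show ?thesis by (simp add: cesaro_def)
  next
    case False
    then have x0: "0 < x" using 0 by auto
    obtain I where I: "((\<lambda>t. Re (fc (of_real c) (of_real t)) / (1 - t)) has_integral I) {0..x}"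
        "Re (cesaro (fc (of_real c)) (of_real x)) = I / x"
      using cesaro_Re[OF holomorphic_on_imp_continuous_on[OF fc_hol] x0 0(2)] by blast
    have ci: "((\<lambda>t. c) has_integral (x * c)) {0..x}"
      using has_integral_const_real[of c 0 x] x0 by (simp add: content_real)
    have "x * c \<le> I"
    proof (rule has_integral_le[OF ci I(1)])
      fix t assume "t \<in> {0..x}"
      then have "0 \<le> t" "t < 1" "0 < 1 - t" "1 - t \<le> 1" using 0 by auto
      then show "c \<le> Re (fc (of_real c) (of_real t)) / (1 - t)"
        using c by (simp add: fc_def le_divide_eq mult_left_le)
    qed
    then have "c \<le> I / x" using x0 by (simp add: le_divide_eq mult.commute)
    then show ?thesis using I(2) 0 by (simp add: fc_def)
  qed
next
  case (Suc n)
  show ?case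
    using cesaro_mono[OF iter_cont[OF fc_hol] iter_cont[OF fc_hol] Suc.IH Suc.prems] by simp
qed

lemma MON2:
  assumes c: "0 \<le> c" "0 \<le> x" "x < 1" and "N \<le> m"
  shows "Re ((cesaro ^^ N) (fc (of_real c)) (of_real x)) \<le> Re ((cesaro ^^ m) (fc (of_real c)) (of_real x))"
  using assms(4)
proof (induction m rule: dec_induct)
  case base then show ?case by simp
next
  case (step m) then show ?case using MON[OF c(1) c(2,3), of m] by simp
qed

lemma vw_pos: "z \<in> ball 0 1 \<Longrightarrow> 0 < vw z"
proof -
  assume z: "z \<in> ball 0 1"
  show ?thesis
  proof (cases "norm z \<le> 1 - 1 / exp 1")
    case False
    then have "1 - norm z < 1 / exp 1" by simp
    moreover have "0 < 1 - norm z" using z by simp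
    ultimately have "ln (1 - norm z) < ln (1 / exp 1)" by simp
    then have "ln (1 - norm z) < -1" by (simp add: ln_div)
    then show ?thesis using False by (simp add: vw_def)
  qed (simp add: vw_def)
qed

lemma vw_le1: "z \<in> ball 0 1 \<Longrightarrow> vw z \<le> 1"
proof -
  assume z: "z \<in> ball 0 1"
  show ?thesis
  proof (cases "norm z \<le> 1 - 1 / exp 1")
    case False
    then have "1 - norm z < 1 / exp 1" by simp
    moreover have "0 < 1 - norm z" using z by simp
    ultimately have "ln (1 - norm z) < ln (1 / exp 1)" by simp
    then have "ln (1 - norm z) < -1" by (simp add: ln_div)
    define a where "a = - ln (1 - norm z)"
    have L: "1 < a" unfolding a_def using \<open>ln (1 - norm z) < -1\<close> by linarith
    then have le: "1 / a \<le> 1" by simp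
    have vweq: "vw z = 1 / a" using False by (simp add: vw_def a_def)
    show ?thesis by (subst vweq) (rule le)
  qed (simp add: vw_def)
qed

lemma vw_pow_mono: "z \<in> ball 0 1 \<Longrightarrow> k \<le> j \<Longrightarrow> vw z ^ j \<le> vw z ^ k"
  using power_decreasing[of k j "vw z"] vw_pos[of z] vw_le1[of z] by simp

lemma in_Hvk_mono:
  assumes "in_Hvk k f" "k \<le> j" shows "in_Hvk j f"
proof -
  obtain M where M: "\<forall>z\<in>ball 0 1. vw z ^ k * norm (f z) \<le> M"
    using assms(1) unfolding in_Hvk_def by blast
  have "\<forall>z\<in>ball 0 1. vw z ^ j * norm (f z) \<le> M"
  proof
    fix z :: complex assume z: "z \<in> ball 0 1"
    have "vw z ^ j * norm (f z) \<le> vw z ^ k * norm (f z)"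
      using vw_pow_mono[OF z assms(2)] by (simp add: mult_right_mono)
    then show "vw z ^ j * norm (f z) \<le> M" using M z by fastforce
  qed
  then show ?thesis using assms(1) unfolding in_Hvk_def by blast
qed

lemma in_Hvk_lin:
  assumes f: "in_Hvk k f" and g: "in_Hvk k g"
  shows "in_Hvk k (\<lambda>z. a * f z + b * g z)"
proof -
  obtain M where M: "\<forall>z\<in>ball 0 1. vw z ^ k * norm (f z) \<le> M"
    using f unfolding in_Hvk_def by blast
  obtain N where N: "\<forall>z\<in>ball 0 1. vw z ^ k * norm (g z) \<le> N"
    using g unfolding in_Hvk_def by blast
  have "vw z ^ k * norm (a * f z + b * g z) \<le> norm a * M + norm b * N" if z: "z \<in> ball 0 1" for z
  proof -
    have vz: "0 \<le> vw z ^ k" using vw_pos[OF z] by simp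
    have "vw z ^ k * norm (a * f z + b * g z) \<le> vw z ^ k * (norm a * norm (f z) + norm b * norm (g z))"
      using vz by (intro mult_left_mono) (auto intro: order_trans[OF norm_triangle_ineq] simp: norm_mult)
    also have "\<dots> = norm a * (vw z ^ k * norm (f z)) + norm b * (vw z ^ k * norm (g z))"
      by (simp add: algebra_simps)
    also have "\<dots> \<le> norm a * M + norm b * N"
      using M N z by (intro add_mono mult_left_mono) auto
    finally show ?thesis .
  qed
  moreover have "(\<lambda>z. a * f z + b * g z) holomorphic_on ball 0 1"
    using f g unfolding in_Hvk_def by (auto intro!: holomorphic_intros)
  ultimately show ?thesis using f g unfolding in_Hvk_def
    by (intro conjI exI[of _ "norm a * M + norm b * N"]) auto
qed

lemma VH_lin:
  assumes "f \<in> VH" "g \<in> VH" shows "(\<lambda>z. a * f z + b * g z) \<in> VH"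
proof -
  obtain k j where k: "in_Hvk k f" and j: "in_Hvk j g" using assms unfolding VH_def by blast
  have "in_Hvk (max k j) f" "in_Hvk (max k j) g"
    using in_Hvk_mono k j by auto
  then show ?thesis unfolding VH_def using in_Hvk_lin by blast
qed

lemma VH_add: "f \<in> VH \<Longrightarrow> g \<in> VH \<Longrightarrow> (\<lambda>z. f z + g z) \<in> VH"
  using VH_lin[of f g 1 1] by simp

lemma VH_diff: "f \<in> VH \<Longrightarrow> g \<in> VH \<Longrightarrow> (\<lambda>z. f z - g z) \<in> VH"
  using VH_lin[of f g 1 "-1"] by simp

lemma VH_scale: "f \<in> VH \<Longrightarrow> (\<lambda>z. c * f z) \<in> VH"
  using VH_lin[of f f c 0] by simp

lemma VH_zero: "(\<lambda>z. 0) \<in> VH"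
  unfolding VH_def in_Hvk_def mem_Collect_eq by (intro exI[of _ 0] conjI) auto

lemma norm_Hvk_upper:
  assumes "in_Hvk k f" "z \<in> ball 0 1"
  shows "vw z ^ k * norm (f z) \<le> norm_Hvk k f"
proof -
  obtain M where M: "\<forall>z\<in>ball 0 1. vw z ^ k * norm (f z) \<le> M"
    using assms(1) unfolding in_Hvk_def by blast
  show ?thesis unfolding norm_Hvk_def
    by (rule cSUP_upper[OF assms(2)]) (use M in \<open>auto intro: bdd_aboveI2\<close>)
qed

lemma seminorm_add:
  "VH_cont_seminorm p \<Longrightarrow> f \<in> VH \<Longrightarrow> g \<in> VH \<Longrightarrow> p (\<lambda>z. f z + g z) \<le> p f + p g"
  unfolding VH_cont_seminorm_def by blast

lemma seminorm_scale:
  "VH_cont_seminorm p \<Longrightarrow> f \<in> VH \<Longrightarrow> p (\<lambda>z. c * f z) = norm c * p f"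
  unfolding VH_cont_seminorm_def by blast

lemma seminorm_zero:
  assumes "VH_cont_seminorm p" shows "p (\<lambda>z. 0) = 0"
proof -
  have h: "\<forall>f\<in>VH. \<forall>c. p (\<lambda>z. c * f z) = norm c * p f"
    using assms unfolding VH_cont_seminorm_def by blast
  from h[rule_format, OF VH_zero, of 0] show ?thesis by simp
qed

lemma seminorm_nonneg:
  assumes p: "VH_cont_seminorm p" and f: "f \<in> VH" shows "0 \<le> p f"
proof -
  have m: "(\<lambda>z. (-1) * f z) \<in> VH" using VH_scale f by blast
  have "p (\<lambda>z. f z + (\<lambda>z. (-1) * f z) z) \<le> p f + p (\<lambda>z. (-1) * f z)"
    using seminorm_add[OF p f m] by simp
  moreover have "p (\<lambda>z. (-1) * f z) = norm (-1::complex) * p f"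
    using seminorm_scale[OF p f] by blast
  moreover have "(\<lambda>z. f z + (\<lambda>z. (-1) * f z) z) = (\<lambda>z. 0)" by auto
  ultimately show ?thesis using seminorm_zero[OF p] by simp
qed

lemma seminorm_sum:
  assumes p: "VH_cont_seminorm p" and q: "VH_cont_seminorm q"
  shows "VH_cont_seminorm (\<lambda>f. p f + q f)"
  unfolding VH_cont_seminorm_def
proof (intro conjI ballI allI impI)
  fix f g assume "f \<in> VH" "g \<in> VH"
  then show "p (\<lambda>z. f z + g z) + q (\<lambda>z. f z + g z) \<le> p f + q f + (p g + q g)"
    using seminorm_add[OF p, of f g] seminorm_add[OF q, of f g] by simp
next
  fix f and c :: complex assume "f \<in> VH"
  then show "p (\<lambda>z. c * f z) + q (\<lambda>z. c * f z) = norm c * (p f + q f)"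
    using p q unfolding VH_cont_seminorm_def by (simp add: distrib_left)
next
  fix k
  obtain C where C: "\<forall>f. in_Hvk k f \<longrightarrow> p f \<le> C * norm_Hvk k f"
    using p unfolding VH_cont_seminorm_def by blast
  obtain D where D: "\<forall>f. in_Hvk k f \<longrightarrow> q f \<le> D * norm_Hvk k f"
    using q unfolding VH_cont_seminorm_def by blast
  show "\<exists>C. \<forall>f. in_Hvk k f \<longrightarrow> p f + q f \<le> C * norm_Hvk k f"
    by (rule exI[of _ "C + D"]) (use C D in \<open>auto simp: distrib_right intro: add_mono\<close>)
qed

definition VHopen :: "(complex \<Rightarrow> complex) set \<Rightarrow> bool" where
  "VHopen = (\<lambda>U. U \<subseteq> VH \<and> (\<forall>x\<in>U. \<exists>p e. VH_cont_seminorm p \<and> e > 0 \<and>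
       {y\<in>VH. p (\<lambda>z. y z - x z) < e} \<subseteq> U))"

lemma istop: "istopology VHopen"
  unfolding istopology_def
proof (intro conjI allI impI)
  fix S T assume S: "VHopen S" and T: "VHopen T"
  show "VHopen (S \<inter> T)"
    unfolding VHopen_def
  proof (intro conjI ballI)
    show "S \<inter> T \<subseteq> VH" using S unfolding VHopen_def by auto
    fix x assume x: "x \<in> S \<inter> T"
    obtain p e where pe: "VH_cont_seminorm p" "e > 0" "{y\<in>VH. p (\<lambda>z. y z - x z) < e} \<subseteq> S"
      using S x unfolding VHopen_def by blast
    obtain q d where qd: "VH_cont_seminorm q" "d > 0" "{y\<in>VH. q (\<lambda>z. y z - x z) < d} \<subseteq> T"
      using T x unfolding VHopen_def by blast
    have xV: "x \<in> VH" using S x unfolding VHopen_def by auto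
    have "{y\<in>VH. p (\<lambda>z. y z - x z) + q (\<lambda>z. y z - x z) < min e d} \<subseteq> S \<inter> T"
    proof
      fix y assume y: "y \<in> {y\<in>VH. p (\<lambda>z. y z - x z) + q (\<lambda>z. y z - x z) < min e d}"
      then have yV: "(\<lambda>z. y z - x z) \<in> VH" using VH_diff xV by auto
      have "0 \<le> p (\<lambda>z. y z - x z)" "0 \<le> q (\<lambda>z. y z - x z)"
        using seminorm_nonneg[OF pe(1) yV] seminorm_nonneg[OF qd(1) yV] .
      then show "y \<in> S \<inter> T" using y pe(3) qd(3) by auto
    qed
    then show "\<exists>p e. VH_cont_seminorm p \<and> e > 0 \<and> {y\<in>VH. p (\<lambda>z. y z - x z) < e} \<subseteq> S \<inter> T"
      using seminorm_sum[OF pe(1) qd(1)] pe(2) qd(2) by (intro exI[of _ "\<lambda>f. p f + q f"] exI[of _ "min e d"]) auto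
  qed
next
  fix K assume K: "\<forall>U\<in>K. VHopen U"
  show "VHopen (\<Union>K)"
    unfolding VHopen_def
  proof (intro conjI ballI)
    show "\<Union>K \<subseteq> VH" using K unfolding VHopen_def by auto
    fix x assume "x \<in> \<Union>K"
    then obtain U where U: "U \<in> K" "x \<in> U" by blast
    then obtain p e where "VH_cont_seminorm p" "e > 0" "{y\<in>VH. p (\<lambda>z. y z - x z) < e} \<subseteq> U"
      using K unfolding VHopen_def by blast
    then show "\<exists>p e. VH_cont_seminorm p \<and> e > 0 \<and> {y\<in>VH. p (\<lambda>z. y z - x z) < e} \<subseteq> \<Union>K"
      using U by blast
  qed
qed

lemma openin_VH: "openin VH_top = VHopen"
  unfolding VH_top_def using istop unfolding VHopen_def by simp

lemma zero_seminorm: "VH_cont_seminorm (\<lambda>f. 0)"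
  unfolding VH_cont_seminorm_def by (auto intro: exI[of _ 0])

lemma topspace_VH: "topspace VH_top = VH"
proof -
  have "VHopen VH" unfolding VHopen_def using zero_seminorm
    by (intro conjI ballI subset_refl exI[of _ "\<lambda>f. 0"] exI[of _ 1]) auto
  then show ?thesis unfolding topspace_def openin_VH VHopen_def by auto
qed

lemma ball_open:
  assumes p: "VH_cont_seminorm p" and e: "e > 0" and x: "x \<in> VH"
  shows "openin VH_top {y\<in>VH. p (\<lambda>z. y z - x z) < e}" "x \<in> {y\<in>VH. p (\<lambda>z. y z - x z) < e}"
proof -
  show "x \<in> {y\<in>VH. p (\<lambda>z. y z - x z) < e}"
    using x e seminorm_zero[OF p] by simp
  show "openin VH_top {y\<in>VH. p (\<lambda>z. y z - x z) < e}"
    unfolding openin_VH VHopen_def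
  proof (intro conjI ballI)
    fix y0 assume y0: "y0 \<in> {y\<in>VH. p (\<lambda>z. y z - x z) < e}"
    have "{y\<in>VH. p (\<lambda>z. y z - y0 z) < e - p (\<lambda>z. y0 z - x z)} \<subseteq> {y\<in>VH. p (\<lambda>z. y z - x z) < e}"
    proof
      fix y assume y: "y \<in> {y\<in>VH. p (\<lambda>z. y z - y0 z) < e - p (\<lambda>z. y0 z - x z)}"
      have a: "(\<lambda>z. y z - y0 z) \<in> VH" "(\<lambda>z. y0 z - x z) \<in> VH"
        using y y0 x VH_diff by auto
      have "p (\<lambda>z. (\<lambda>z. y z - y0 z) z + (\<lambda>z. y0 z - x z) z) \<le> p (\<lambda>z. y z - y0 z) + p (\<lambda>z. y0 z - x z)"
        using seminorm_add[OF p a] by simp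
      moreover have "(\<lambda>z. (\<lambda>z. y z - y0 z) z + (\<lambda>z. y0 z - x z) z) = (\<lambda>z. y z - x z)" by auto
      ultimately show "y \<in> {y\<in>VH. p (\<lambda>z. y z - x z) < e}" using y by auto
    qed
    then show "\<exists>p' e'. VH_cont_seminorm p' \<and> e' > 0 \<and> {y\<in>VH. p' (\<lambda>z. y z - y0 z) < e'} \<subseteq> {y\<in>VH. p (\<lambda>z. y z - x z) < e}"
      using p y0 by (intro exI[of _ p] exI[of _ "e - p (\<lambda>z. y0 z - x z)"]) auto
  qed auto
qed

lemma vw_small: "norm z \<le> 1 - 1 / exp 1 \<Longrightarrow> vw z = 1"
  by (simp add: vw_def)

lemma half_small: "norm (z::complex) \<le> 1/2 \<Longrightarrow> vw z = 1"
proof -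
  assume z: "norm z \<le> 1/2"
  have "2 \<le> exp (1::real)" using exp_ge_add_one_self[of 1] by simp
  then have "1 / exp 1 \<le> (1/2::real)" by (simp add: divide_le_eq)
  then show ?thesis using z by (intro vw_small) linarith
qed

lemma VH_hol: "f \<in> VH \<Longrightarrow> f holomorphic_on ball 0 1"
  unfolding VH_def in_Hvk_def by blast

lemma VH_diffble: "f \<in> VH \<Longrightarrow> f field_differentiable at 0"
  using VH_hol holomorphic_on_imp_differentiable_at by fastforce

definition pD :: "(complex \<Rightarrow> complex) \<Rightarrow> real" where
  "pD g = norm (g 0) + norm (g 0 - deriv g 0)"

lemma deriv_bound:
  assumes f: "in_Hvk k f"
  shows "norm (f 0) \<le> norm_Hvk k f" "norm (deriv f 0) \<le> 2 * norm_Hvk k f"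
proof -
  show "norm (f 0) \<le> norm_Hvk k f"
    using norm_Hvk_upper[OF f, of 0] by (simp add: vw_def)
  have hol: "f holomorphic_on ball 0 1" using f unfolding in_Hvk_def by blast
  have "norm ((deriv ^^ 1) f 0) \<le> fact 1 * norm_Hvk k f / (1/2) ^ 1"
  proof (rule Cauchy_inequality)
    show "f holomorphic_on ball 0 (1/2)" using hol by (rule holomorphic_on_subset) auto
    show "continuous_on (cball 0 (1/2)) f"
      using holomorphic_on_imp_continuous_on[OF hol] by (rule continuous_on_subset) auto
    fix x :: complex assume "norm (0 - x) = 1/2"
    then have x: "norm x = 1/2" by simp
    then have "x \<in> ball 0 1" by simp
    from norm_Hvk_upper[OF f this] half_small[of x] x
    show "norm (f x) \<le> norm_Hvk k f" by simp
  qed auto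
  then show "norm (deriv f 0) \<le> 2 * norm_Hvk k f" by simp
qed

lemma pD_cont: "VH_cont_seminorm pD"
  unfolding VH_cont_seminorm_def
proof (intro conjI ballI allI impI)
  fix f g assume f: "f \<in> VH" and g: "g \<in> VH"
  have "deriv (\<lambda>z. f z + g z) 0 = deriv f 0 + deriv g 0"
    using VH_diffble[OF f] VH_diffble[OF g] by simp
  then have "pD (\<lambda>z. f z + g z) = norm (f 0 + g 0) + norm ((f 0 - deriv f 0) + (g 0 - deriv g 0))"
    unfolding pD_def by (simp add: algebra_simps)
  also have "\<dots> \<le> pD f + pD g" unfolding pD_def
    using norm_triangle_ineq[of "f 0" "g 0"] norm_triangle_ineq[of "f 0 - deriv f 0" "g 0 - deriv g 0"] by simp
  finally show "pD (\<lambda>z. f z + g z) \<le> pD f + pD g" .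
next
  fix f and c :: complex assume f: "f \<in> VH"
  have "deriv (\<lambda>z. c * f z) 0 = c * deriv f 0"
    using VH_diffble[OF f] by simp
  then have "pD (\<lambda>z. c * f z) = norm (c * f 0) + norm (c * (f 0 - deriv f 0))"
    unfolding pD_def by (simp add: algebra_simps)
  then show "pD (\<lambda>z. c * f z) = norm c * pD f"
    unfolding pD_def by (simp add: norm_mult distrib_left)
next
  fix k
  show "\<exists>C. \<forall>f. in_Hvk k f \<longrightarrow> pD f \<le> C * norm_Hvk k f"
  proof (intro exI[of _ 4] allI impI)
    fix f assume f: "in_Hvk k f"
    have "pD f \<le> norm (f 0) + (norm (f 0) + norm (deriv f 0))"
      unfolding pD_def using norm_triangle_ineq4[of "f 0" "deriv f 0"] by simp
    then show "pD f \<le> 4 * norm_Hvk k f" using deriv_bound[OF f] by simp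
  qed
qed

lemma iter_props:
  assumes hol: "f holomorphic_on ball 0 1"
  shows "(cesaro ^^ n) f 0 = f 0 \<and>
         (cesaro ^^ n) f 0 - deriv ((cesaro ^^ n) f) 0 = (f 0 - deriv f 0) / 2 ^ n"
proof (induction n)
  case 0 then show ?case by simp
next
  case (Suc n)
  have h: "(cesaro ^^ n) f holomorphic_on ball 0 1" by (rule iter_hol[OF hol])
  define P where "P = (cesaro ^^ n) f"
  have PS: "(cesaro ^^ Suc n) f = cesaro P" by (simp add: P_def)
  have c0: "cesaro P 0 = P 0" and c1: "deriv (cesaro P) 0 = (P 0 + deriv P 0) / 2"
    using cesaro_hol(2,3)[OF h] unfolding P_def by auto
  have IH0: "P 0 = f 0" and IH1: "P 0 - deriv P 0 = (f 0 - deriv f 0) / 2 ^ n"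
    using Suc.IH unfolding P_def by auto
  have "cesaro P 0 - deriv (cesaro P) 0 = (P 0 - deriv P 0) / 2"
    unfolding c0 c1 by (simp add: field_simps)
  also have "\<dots> = (f 0 - deriv f 0) / 2 ^ Suc n"
    unfolding IH1 by (simp add: divide_divide_eq_left mult.commute)
  finally show ?case unfolding PS using c0 IH0 by simp
qed

lemma not_supercyclic: "\<not> supercyclic_VH cesaro"
proof
  assume "supercyclic_VH cesaro"
  then obtain z0 where z0: "z0 \<in> VH"
    and dense: "VH_top closure_of {(\<lambda>w. c * (cesaro ^^ n) z0 w) | c n. (c::complex) \<in> UNIV \<and> (n::nat) \<in> UNIV} = VH"
    unfolding supercyclic_VH_def by blast
  define a where "a = z0 0"
  define \<beta> where "\<beta> = z0 0 - deriv z0 0"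
  define R :: real where "R = 3 * norm \<beta> / (2 * norm a) + 1"
  define f where "f = (\<lambda>z::complex. if z \<in> ball 0 1 then 1 + (1 - of_real R) * z else 0)"
  have holf: "f holomorphic_on ball 0 1"
    by (rule holomorphic_transform[of "\<lambda>z. 1 + (1 - of_real R) * z"]) (auto simp: f_def intro!: holomorphic_intros)
  have fV: "f \<in> VH"
  proof -
    have "vw z ^ 0 * norm (f z) \<le> 1 + norm (1 - of_real R :: complex)" if "z \<in> ball 0 1" for z
    proof -
      have "norm (f z) \<le> 1 + norm ((1 - of_real R) * z)"
        using that norm_triangle_ineq[of 1 "(1 - of_real R) * z"] by (simp add: f_def)
      also have "\<dots> \<le> 1 + norm (1 - of_real R :: complex)"
        using that by (simp add: norm_mult mult_left_le)
      finally show ?thesis by simp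
    qed
    then show ?thesis unfolding VH_def in_Hvk_def using holf
      by (intro CollectI exI[of _ 0] conjI exI[of _ "1 + norm (1 - of_real R :: complex)"]) (auto simp: f_def)
  qed
  have f0: "f 0 = 1" by (simp add: f_def)
  have df0: "deriv f 0 = 1 - of_real R"
  proof -
    have "deriv f 0 = deriv (\<lambda>z. 1 + (1 - of_real R) * z) 0"
      by (rule complex_derivative_transform_within_open[OF holf _ open_ball])
         (auto simp: f_def intro!: holomorphic_intros)
    also have "\<dots> = 1 - of_real R"
      by (rule DERIV_imp_deriv) (auto intro!: derivative_eq_intros)
    finally show ?thesis .
  qed
  define S where "S = {(\<lambda>w. c * (cesaro ^^ n) z0 w) | c n. (c::complex) \<in> UNIV \<and> (n::nat) \<in> UNIV}"
  have fcl: "f \<in> VH_top closure_of S"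
    using dense fV unfolding S_def by simp
  define T where "T = {y\<in>VH. pD (\<lambda>z. y z - f z) < 1/2}"
  have T: "openin VH_top T" "f \<in> T"
    unfolding T_def using ball_open[OF pD_cont _ fV, of "1/2"] by auto
  have "\<forall>T. f \<in> T \<and> openin VH_top T \<longrightarrow> (\<exists>y. y \<in> S \<and> y \<in> T)"
    using fcl unfolding in_closure_of by blast
  then obtain y where yS: "y \<in> S" and yT0: "y \<in> T"
    using T by blast
  have yT: "y \<in> VH" "pD (\<lambda>z. y z - f z) < 1/2" using yT0 unfolding T_def by auto
  from yS have "\<exists>c n. y = (\<lambda>w. c * (cesaro ^^ n) z0 w)" unfolding S_def by blast
  then obtain c n where yc: "y = (\<lambda>w. c * (cesaro ^^ n) z0 w)" by blast
  define G where "G = (cesaro ^^ n) z0"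
  have holG: "G holomorphic_on ball 0 1" unfolding G_def by (rule iter_hol[OF VH_hol[OF z0]])
  have G0: "G 0 = a" and G1: "G 0 - deriv G 0 = \<beta> / 2 ^ n"
    using iter_props[OF VH_hol[OF z0], of n] unfolding G_def a_def \<beta>_def by auto
  have dG: "G field_differentiable at 0"
    using holG holomorphic_on_imp_differentiable_at by fastforce
  have df: "f field_differentiable at 0"
    using holf holomorphic_on_imp_differentiable_at by fastforce
  have "deriv (\<lambda>z. c * G z - f z) 0 = c * deriv G 0 - deriv f 0"
    using dG df by (simp add: field_differentiable_mult field_differentiable_const)
  then have pDval: "pD (\<lambda>z. y z - f z) = norm (c * a - 1) + norm (c * (\<beta> / 2 ^ n) - of_real R)"
    unfolding pD_def yc G_def[symmetric] using G0 G1 f0 df0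
    by (simp add: algebra_simps)
  have h12: "norm (c * a - 1) + norm (c * (\<beta> / 2 ^ n) - of_real R) < 1/2"
    using pDval yT(2) by linarith
  have h1: "norm (c * a - 1) < 1/2" and h2: "norm (c * (\<beta> / 2 ^ n) - of_real R) < 1/2"
    using h12 norm_ge_zero[of "c * a - 1"] norm_ge_zero[of "c * (\<beta> / 2 ^ n) - of_real R"] by linarith+
  have "norm (c * a) > 1/2"
    using h1 norm_triangle_ineq2[of 1 "c * a"] by (simp add: norm_minus_commute)
  then have nca: "norm c * norm a > 1/2" by (simp add: norm_mult)
  have "norm (c * a) < 3/2"
    using h1 norm_triangle_ineq2[of "c * a" 1] by simp
  then have nca2: "norm c * norm a < 3/2" by (simp add: norm_mult)
  have a0: "norm a > 0" using nca by (cases "norm a = 0") auto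
  have ncl: "norm c < 3 / (2 * norm a)" using nca2 a0 by (simp add: field_simps)
  have "norm c * norm \<beta> \<le> 3 / (2 * norm a) * norm \<beta>"
    using less_imp_le[OF ncl] by (rule mult_right_mono) simp
  moreover have "norm (c * (\<beta> / 2 ^ n)) \<le> norm c * norm \<beta>"
  proof -
    have "norm (c * (\<beta> / 2 ^ n)) = norm c * norm \<beta> / 2 ^ n" by (simp add: norm_mult norm_divide norm_power)
    also have "\<dots> \<le> norm c * norm \<beta>" using divide_left_mono[of 1 "(2::real) ^ n" "norm c * norm \<beta>"] by simp
    finally show ?thesis .
  qed
  ultimately have "norm (c * (\<beta> / 2 ^ n)) \<le> R - 1" unfolding R_def by simp
  moreover have "R - norm (c * (\<beta> / 2 ^ n)) \<le> norm (c * (\<beta> / 2 ^ n) - of_real R)"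
  proof -
    have R0: "0 \<le> R" unfolding R_def by simp
    have "norm (of_real R :: complex) = R" using R0 by simp
    then show ?thesis using norm_triangle_ineq2[of "of_real R" "c * (\<beta> / 2 ^ n)"]
      by (simp only: norm_minus_commute)
  qed
  ultimately show False using h2 by simp
qed

definition W :: "nat \<Rightarrow> real" where "W k = (4 * real k) ^ k + 1"

lemma W_ge1: "1 \<le> W k" unfolding W_def by simp

lemma wt_bound:
  assumes z: "z \<in> ball (0::complex) 1"
  shows "(1 - norm z) powr (1/4) \<le> W k * vw z ^ k"
proof (cases "norm z \<le> 1 - 1 / exp 1")
  case True
  have "(1 - norm z) powr (1/4) \<le> 1" using z by (intro powr_le1) auto
  then show ?thesis using True W_ge1[of k] by (simp add: vw_def)
next
  case False
  define t where "t = 1 - norm z"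
  have t0: "0 < t" "t < 1" using z False unfolding t_def by auto
  have te: "t < 1 / exp 1" using False unfolding t_def by simp
  define L where "L = - ln t"
  have "ln t < ln (1 / exp 1)" using t0 te by simp
  then have L1: "1 < L" unfolding L_def by (simp add: ln_div)
  have vwL: "vw z = 1 / L" using False unfolding vw_def L_def t_def by simp
  have vp: "0 < vw z" using vw_pos[OF z] .
  show ?thesis
  proof (cases "k = 0")
    case True
    have "t powr (1/4) \<le> 1" using t0 by (intro powr_le1) auto
    then show ?thesis using True unfolding t_def W_def by simp
  next
    case False
    define u where "u = (1 / t) powr (1 / (4 * real k))"
    have u0: "0 < u" using t0 unfolding u_def by simp
    have "ln (1 / t) \<le> (1 / t) powr (1 / (4 * real k)) / (1 / (4 * real k))"
      using t0 False by (intro ln_powr_bound) auto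
    then have "L \<le> 4 * real k * u" unfolding L_def u_def using t0 by (simp add: ln_div mult.commute)
    then have Lk: "L ^ k \<le> (4 * real k * u) ^ k" using L1 by (intro power_mono) auto
    have "u ^ k = u powr real k" using u0 by (simp add: powr_realpow)
    also have "\<dots> = (1 / t) powr (1/4)" unfolding u_def powr_powr using False by simp
    finally have uk: "u ^ k = (1 / t) powr (1/4)" .
    have tt: "t powr (1/4) * (1 / t) powr (1/4) = 1"
      using t0 by (simp add: powr_mult[symmetric])
    have "t powr (1/4) * L ^ k \<le> t powr (1/4) * (4 * real k * u) ^ k"
      using Lk by (intro mult_left_mono) auto
    also have "\<dots> = (4 * real k) ^ k * (t powr (1/4) * u ^ k)"
      by (simp add: power_mult_distrib)
    also have "\<dots> = (4 * real k) ^ k" using uk tt by simp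
    finally have main: "t powr (1/4) * L ^ k \<le> (4 * real k) ^ k" .
    have "t powr (1/4) = t powr (1/4) * L ^ k * vw z ^ k"
      using L1 by (simp add: vwL power_one_over)
    also have "\<dots> \<le> (4 * real k) ^ k * vw z ^ k"
      using main vp by (intro mult_right_mono) auto
    also have "\<dots> \<le> W k * vw z ^ k"
      unfolding W_def using vp by (intro mult_right_mono) auto
    finally have "t powr (1/4) \<le> W k * vw z ^ k" .
    then show ?thesis by (simp only: t_def)
  qed
qed

definition qW :: "(complex \<Rightarrow> complex) \<Rightarrow> real" where
  "qW g = (SUP z\<in>ball 0 1. (1 - norm z) powr (1/4) * norm (g z))"

lemma qW_pt_bound:
  assumes "in_Hvk k g" "z \<in> ball 0 1"
  shows "(1 - norm z) powr (1/4) * norm (g z) \<le> W k * norm_Hvk k g"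
proof -
  have "(1 - norm z) powr (1/4) * norm (g z) \<le> W k * vw z ^ k * norm (g z)"
    by (rule mult_right_mono[OF wt_bound[OF assms(2)]]) simp
  also have "\<dots> = W k * (vw z ^ k * norm (g z))" by simp
  also have "\<dots> \<le> W k * norm_Hvk k g"
    by (rule mult_left_mono[OF norm_Hvk_upper[OF assms]]) (use W_ge1[of k] in linarith)
  finally show ?thesis .
qed

lemma qW_bdd:
  assumes "g \<in> VH"
  shows "bdd_above ((\<lambda>z. (1 - norm z) powr (1/4) * norm (g z)) ` ball 0 1)"
proof -
  obtain k where k: "in_Hvk k g" using assms unfolding VH_def by blast
  show ?thesis by (rule bdd_aboveI2[where M="W k * norm_Hvk k g"]) (rule qW_pt_bound[OF k])
qed

lemma qW_upper:
  assumes "g \<in> VH" "z \<in> ball 0 1"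
  shows "(1 - norm z) powr (1/4) * norm (g z) \<le> qW g"
  unfolding qW_def by (rule cSUP_upper[OF assms(2) qW_bdd[OF assms(1)]])

lemma qW_scale_le:
  assumes "f \<in> VH"
  shows "qW (\<lambda>z. c * f z) \<le> norm c * qW f"
  unfolding qW_def
proof (rule cSUP_least)
  show "ball (0::complex) 1 \<noteq> {}" by simp
  fix z :: complex assume z: "z \<in> ball 0 1"
  have "(1 - norm z) powr (1/4) * norm (c * f z) = norm c * ((1 - norm z) powr (1/4) * norm (f z))"
    by (simp add: norm_mult)
  also have "\<dots> \<le> norm c * qW f"
    by (rule mult_left_mono[OF qW_upper[OF assms z]]) simp
  finally show "(1 - norm z) powr (1/4) * norm (c * f z) \<le> norm c * (SUP z\<in>ball 0 1. (1 - norm z) powr (1/4) * norm (f z))"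
    unfolding qW_def .
qed

lemma qW_cont: "VH_cont_seminorm qW"
  unfolding VH_cont_seminorm_def
proof (intro conjI ballI allI impI)
  fix f g assume f: "f \<in> VH" and g: "g \<in> VH"
  show "qW (\<lambda>z. f z + g z) \<le> qW f + qW g"
    unfolding qW_def[of "\<lambda>z. f z + g z"]
  proof (rule cSUP_least)
    show "ball (0::complex) 1 \<noteq> {}" by simp
    fix z :: complex assume z: "z \<in> ball 0 1"
    have "(1 - norm z) powr (1/4) * norm (f z + g z) \<le> (1 - norm z) powr (1/4) * (norm (f z) + norm (g z))"
      by (intro mult_left_mono norm_triangle_ineq) auto
    also have "\<dots> = (1 - norm z) powr (1/4) * norm (f z) + (1 - norm z) powr (1/4) * norm (g z)"
      by (simp add: distrib_left)
    also have "\<dots> \<le> qW f + qW g"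
      using qW_upper[OF f z] qW_upper[OF g z] by simp
    finally show "(1 - norm z) powr (1/4) * norm (f z + g z) \<le> qW f + qW g" .
  qed
next
  fix f and c :: complex assume f: "f \<in> VH"
  show "qW (\<lambda>z. c * f z) = norm c * qW f"
  proof (cases "c = 0")
    case True
    have "ball (0::complex) 1 \<noteq> {}" by simp
    then show ?thesis using True by (simp add: qW_def)
  next
    case False
    have cf: "(\<lambda>z. c * f z) \<in> VH" using VH_scale f by blast
    have "qW (\<lambda>z. inverse c * (\<lambda>z. c * f z) z) \<le> norm (inverse c) * qW (\<lambda>z. c * f z)"
      by (rule qW_scale_le[OF cf])
    moreover have "(\<lambda>z. inverse c * (\<lambda>z. c * f z) z) = f" using False by auto
    ultimately have "qW f \<le> norm (inverse c) * qW (\<lambda>z. c * f z)" by simp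
    then have "norm c * qW f \<le> norm c * (norm (inverse c) * qW (\<lambda>z. c * f z))"
      by (rule mult_left_mono) simp
    also have "\<dots> = qW (\<lambda>z. c * f z)"
      using False by (simp add: norm_inverse)
    finally have "norm c * qW f \<le> qW (\<lambda>z. c * f z)" .
    then show ?thesis using qW_scale_le[OF f, of c] by simp
  qed
next
  fix k
  show "\<exists>C. \<forall>f. in_Hvk k f \<longrightarrow> qW f \<le> C * norm_Hvk k f"
  proof (intro exI[of _ "W k"] allI impI)
    fix f assume f: "in_Hvk k f"
    show "qW f \<le> W k * norm_Hvk k f" unfolding qW_def
      by (rule cSUP_least) (use qW_pt_bound[OF f] in auto)
  qed
qed

lemma fc_VH: "fc c \<in> VH"
proof -
  have "in_Hvk 0 (fc c)"
    unfolding in_Hvk_def using fc_hol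
    by (intro conjI exI[of _ "norm c"]) (auto simp: fc_def)
  then show ?thesis unfolding VH_def by blast
qed

lemma exp_ratio: "1 < 4 * exp (-1::real)"
proof -
  have "exp (1::real) \<le> 3" by (rule exp_le)
  then have "exp (1::real) < 4" by simp
  then show ?thesis by (simp add: exp_minus field_simps)
qed

lemma not_power_bounded: "\<not> power_bounded_VH cesaro"
proof
  assume pb: "power_bounded_VH cesaro"
  define V where "V = {y\<in>VH. qW (\<lambda>z. y z - (\<lambda>_. 0) z) < 1}"
  have V: "openin VH_top V" "(\<lambda>_. 0) \<in> V"
    unfolding V_def using ball_open[OF qW_cont zero_less_one VH_zero] by auto
  have "\<exists>U. openin VH_top U \<and> (\<lambda>_. 0) \<in> U \<and> (\<forall>n::nat. \<forall>f\<in>U. (cesaro ^^ n) f \<in> V)"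
    using pb V unfolding power_bounded_VH_def by simp
  then obtain U where U3: "openin VH_top U \<and> (\<lambda>_. 0) \<in> U \<and> (\<forall>n::nat. \<forall>f\<in>U. (cesaro ^^ n) f \<in> V)"
    by (elim exE)
  have U: "openin VH_top U" "(\<lambda>_. 0) \<in> U" and UV: "\<forall>n::nat. \<forall>f\<in>U. (cesaro ^^ n) f \<in> V"
    using U3 by simp_all
  have "VHopen U" using U(1) unfolding openin_VH .
  then have "\<forall>x\<in>U. \<exists>p e. VH_cont_seminorm p \<and> e > 0 \<and> {y\<in>VH. p (\<lambda>z. y z - x z) < e} \<subseteq> U"
    unfolding VHopen_def by (rule conjunct2)
  from bspec[OF this U(2)] obtain p e where pe3: "VH_cont_seminorm p \<and> e > 0 \<and> {y\<in>VH. p (\<lambda>z. y z - (\<lambda>_. 0) z) < e} \<subseteq> U"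
    by (elim exE)
  have p: "VH_cont_seminorm p" "e > 0" and pU: "{y\<in>VH. p (\<lambda>z. y z - (\<lambda>_. 0) z) < e} \<subseteq> U"
    using pe3 by simp_all
  define f1 where "f1 = fc 1"
  have f1V: "f1 \<in> VH" unfolding f1_def by (rule fc_VH)
  have p1: "0 \<le> p f1" by (rule seminorm_nonneg[OF p(1) f1V])
  define c where "c = e / (p f1 + 1)"
  have c0: "0 < c" unfolding c_def using p(2) p1 by simp
  have fcc: "fc (of_real c) = (\<lambda>z. of_real c * f1 z)"
    unfolding f1_def fc_def by auto
  have "p (fc (of_real c)) = c * p f1"
    unfolding fcc using seminorm_scale[OF p(1) f1V, of "of_real c"] c0 by simp
  also have "\<dots> < e"
  proof -
    have "c * p f1 < c * (p f1 + 1)" using c0 by simp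
    also have "\<dots> = e" unfolding c_def using p1 by simp
    finally show ?thesis .
  qed
  finally have "p (fc (of_real c)) < e" .
  then have "fc (of_real c) \<in> U" using pU fc_VH by auto
  then have inV: "\<And>n. (cesaro ^^ n) (fc (of_real c)) \<in> V" using UV by blast
  obtain n where n: "1 / c < (4 * exp (-1)) ^ n"
    using real_arch_pow[OF exp_ratio] by blast
  define x where "x = 1 - exp (- (4 * real n))"
  have x0: "0 \<le> x" "x < 1" unfolding x_def by auto
  have lnx: "- ln (1 - x) = 4 * real n" unfolding x_def by simp
  have wx: "(1 - x) powr (1/4) = exp (- real n)" unfolding x_def by (simp add: exp_powr_real)
  define G where "G = (cesaro ^^ n) (fc (of_real c))"
  have GV: "G \<in> VH" and Gq: "qW (\<lambda>z. G z - 0) < 1" using inV[of n] unfolding V_def G_def by auto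
  have xb: "complex_of_real x \<in> ball 0 1" using x0 by simp
  have "(1 - norm (complex_of_real x)) powr (1/4) * norm (G (of_real x)) \<le> qW G"
    by (rule qW_upper[OF GV xb])
  then have up: "exp (- real n) * norm (G (of_real x)) < 1"
    using Gq x0 wx by simp
  have lb: "c * (4 * real n) ^ n / fact n \<le> norm (G (of_real x))"
    using LB[OF less_imp_le[OF c0] x0, of n] lnx complex_Re_le_cmod[of "G (of_real x)"]
    unfolding G_def by simp
  have "c * 4 ^ n \<le> c * (4 * real n) ^ n / fact n"
  proof -
    have fpos: "0 < (fact n :: real)" by simp
    have "(fact n :: real) \<le> real n ^ n" using fact_le_power[of n] by simp
    then have "c * 4 ^ n * fact n \<le> c * 4 ^ n * real n ^ n"
      using c0 by (intro mult_left_mono) auto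
    then show ?thesis using fpos by (simp add: le_divide_eq power_mult_distrib mult.assoc)
  qed
  with lb have lb2: "c * 4 ^ n \<le> norm (G (of_real x))" by linarith
  have "exp (- real n) * (c * 4 ^ n) \<le> exp (- real n) * norm (G (of_real x))"
    using lb2 by (intro mult_left_mono) auto
  moreover have "exp (- real n) * (c * 4 ^ n) = c * (4 * exp (-1)) ^ n"
    using exp_of_nat_mult[of n "-1::real"] by (simp add: power_mult_distrib)
  ultimately have "c * (4 * exp (-1)) ^ n < 1" using up by linarith
  moreover have "1 < c * (4 * exp (-1)) ^ n"
    using n c0 by (simp add: divide_less_eq mult.commute)
  ultimately show False by linarith
qed

lemma eval_cont:
  assumes x: "w \<in> ball 0 1"
  shows "VH_cont_seminorm (\<lambda>h. norm (h w))"
  unfolding VH_cont_seminorm_def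
proof (intro conjI ballI allI impI)
  fix f g :: "complex \<Rightarrow> complex"
  show "norm (f w + g w) \<le> norm (f w) + norm (g w)" by (rule norm_triangle_ineq)
next
  fix f :: "complex \<Rightarrow> complex" and c :: complex
  show "norm (c * f w) = norm c * norm (f w)" by (rule norm_mult)
next
  fix k
  have vp: "0 < vw w ^ k" using vw_pos[OF x] by simp
  show "\<exists>C. \<forall>f. in_Hvk k f \<longrightarrow> norm (f w) \<le> C * norm_Hvk k f"
  proof (intro exI[of _ "1 / vw w ^ k"] allI impI)
    fix f assume f: "in_Hvk k f"
    have "vw w ^ k * norm (f w) \<le> norm_Hvk k f" by (rule norm_Hvk_upper[OF f x])
    then show "norm (f w) \<le> 1 / vw w ^ k * norm_Hvk k f"
      using vp by (simp add: field_simps)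
  qed
qed

lemma mean_lb:
  assumes x0: "0 \<le> x" "x < 1" and N: "1 \<le> N" and n: "2 * N \<le> n"
  shows "(- ln (1 - x)) ^ N / fact N / 2 \<le> Re (cesaro_mean cesaro n (fc 1) (of_real x))"
proof -
  define A where "A = (- ln (1 - x)) ^ N / fact N"
  define a where "a = (\<lambda>m. Re ((cesaro ^^ m) (fc 1) (of_real x)))"
  have LB1: "(- ln (1 - x)) ^ m / fact m \<le> a m" for m
    using LB[of 1 x m] x0 unfolding a_def by simp
  have Lnn: "0 \<le> - ln (1 - x)" using x0 by simp
  have nn: "0 \<le> a m" for m
    using LB1[of m] Lnn by (meson divide_nonneg_pos fact_gt_zero order_trans zero_le_power)
  have geA: "A \<le> a m" if "N \<le> m" for m
  proof -
    have "A \<le> a N" using LB1[of N] unfolding A_def .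
    also have "a N \<le> a m" using MON2[of 1 x N m] x0 that unfolding a_def by simp
    finally show ?thesis .
  qed
  have A0: "0 \<le> A" unfolding A_def using Lnn by simp
  have "(\<Sum>m\<in>{N..n}. A) \<le> (\<Sum>m\<in>{N..n}. a m)"
    by (rule sum_mono) (use geA in auto)
  also have "\<dots> \<le> (\<Sum>m\<in>{1..n}. a m)"
    by (rule sum_mono2) (use N nn in auto)
  finally have s: "real (Suc n - N) * A \<le> (\<Sum>m\<in>{1..n}. a m)" by simp
  have npos: "0 < real n" using n N by simp
  have "real n / 2 \<le> real (Suc n - N)" using n by linarith
  then have "real n / 2 * A \<le> real (Suc n - N) * A" using A0 by (intro mult_right_mono) auto
  with s have "real n / 2 * A \<le> (\<Sum>m\<in>{1..n}. a m)" by linarith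
  then have "A / 2 \<le> (\<Sum>m\<in>{1..n}. a m) / real n" using npos by (simp add: field_simps)
  moreover have "Re (cesaro_mean cesaro n (fc 1) (of_real x)) = (\<Sum>m\<in>{1..n}. a m) / real n"
    unfolding cesaro_mean_def a_def by (simp add: Re_divide_of_nat)
  ultimately show ?thesis unfolding A_def by simp
qed

lemma not_mean_ergodic: "\<not> mean_ergodic_VH cesaro"
proof
  assume "mean_ergodic_VH cesaro"
  then obtain g where lim: "limitin VH_top (\<lambda>n. cesaro_mean cesaro n (fc 1)) g sequentially"
    unfolding mean_ergodic_VH_def using fc_VH by blast
  have gV: "g \<in> VH" using limitin_topspace[OF lim] topspace_VH by simp
  then obtain k where k: "in_Hvk k g" unfolding VH_def by blast
  then obtain M where M: "\<forall>z\<in>ball 0 1. vw z ^ k * norm (g z) \<le> M" unfolding in_Hvk_def by blast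
  define N where "N = Suc k"
  define L where "L = 2 * fact N * (\<bar>M\<bar> + 2) + 2"
  have L2: "2 \<le> L" unfolding L_def by simp
  define x where "x = 1 - exp (- L)"
  have x0: "0 \<le> x" "x < 1" unfolding x_def using L2 by auto
  have lnx: "- ln (1 - x) = L" unfolding x_def by simp
  have xb: "complex_of_real x \<in> ball 0 1" using x0 by simp
  have "exp (- L) < exp (-1)" using L2 by simp
  moreover have "exp (-1) = 1 / exp (1::real)" by (simp add: exp_minus inverse_eq_divide)
  ultimately have "1 - 1 / exp 1 < x" unfolding x_def by linarith
  moreover have "norm (complex_of_real x) = x" using x0 by simp
  ultimately have "\<not> norm (complex_of_real x) \<le> 1 - 1 / exp 1" by linarith
  then have vwx: "vw (complex_of_real x) = 1 / L"
    unfolding vw_def using x0 lnx by simp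
  define T where "T = {y\<in>VH. norm ((\<lambda>z. y z - g z) (complex_of_real x)) < 1}"
  have T: "openin VH_top T" "g \<in> T"
    unfolding T_def using ball_open[OF eval_cont[OF xb] zero_less_one gV] by auto
  have ev1: "eventually (\<lambda>n. cesaro_mean cesaro n (fc 1) \<in> T) sequentially"
    using lim T unfolding limitin_def by blast
  have ev2: "eventually (\<lambda>n. 2 * N \<le> n) sequentially"
    by (rule eventually_ge_at_top)
  obtain n where n1: "cesaro_mean cesaro n (fc 1) \<in> T" and n2: "2 * N \<le> n"
    using eventually_happens'[OF _ eventually_conj[OF ev1 ev2]] by auto
  define m where "m = cesaro_mean cesaro n (fc 1) (of_real x)"
  have close: "norm (m - g (of_real x)) < 1" using n1 unfolding T_def m_def by simp
  have "L ^ N / fact N / 2 \<le> Re m"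
    using mean_lb[OF x0 _ n2] lnx unfolding m_def N_def by simp
  also have "Re m \<le> norm m" by (rule complex_Re_le_cmod)
  also have "norm m \<le> norm (g (of_real x)) + 1"
    using close norm_triangle_ineq2[of m "g (of_real x)"] by linarith
  finally have lower: "L ^ N / fact N / 2 - 1 \<le> norm (g (of_real x))" by simp
  have "vw (of_real x) ^ k * norm (g (of_real x)) \<le> M" using M xb by blast
  then have "norm (g (of_real x)) / L ^ k \<le> M" using vwx by (simp add: power_one_over)
  then have upper: "norm (g (of_real x)) \<le> M * L ^ k" using L2 by (simp add: divide_le_eq)
  have Lk: "1 \<le> L ^ k" using L2 by simp
  have aux: "(a::real) * b / c / 2 = b * (a / (2 * c))" for a b c by (simp add: mult.commute)
  have "L ^ N / fact N / 2 = L ^ k * (L / (2 * fact N))"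
    unfolding N_def power_Suc by (rule aux)
  also have "\<dots> \<ge> L ^ k * (\<bar>M\<bar> + 2)"
  proof -
    have "\<bar>M\<bar> + 2 \<le> L / (2 * fact N)" unfolding L_def by (simp add: le_divide_eq)
    then show ?thesis using Lk by (intro mult_left_mono) auto
  qed
  finally have "L ^ k * (\<bar>M\<bar> + 2) \<le> L ^ N / fact N / 2" .
  moreover have "M * L ^ k + 2 \<le> L ^ k * (\<bar>M\<bar> + 2)"
  proof -
    have "M * L ^ k \<le> \<bar>M\<bar> * L ^ k" using Lk by (intro mult_right_mono) auto
    moreover have "L ^ k * (\<bar>M\<bar> + 2) = \<bar>M\<bar> * L ^ k + 2 * L ^ k" by (simp add: algebra_simps)
    ultimately show ?thesis using Lk by linarith
  qed
  ultimately show False using lower upper by linarith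
qed

theorem proposition2p6:
  shows "\<not> power_bounded_VH cesaro \<and> \<not> mean_ergodic_VH cesaro \<and> \<not> supercyclic_VH cesaro"
  using not_power_bounded not_mean_ergodic not_supercyclic by blast

end
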